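(* If $K$ is a convex body in $\mathbb{R}^n$ whose centroid is the origin, and $K\subset R\,B^n$ for some $R>0$, then $rB^n\subset K$ for some $$r\geq \frac{n^{n/2}}{5^n}\cdot\frac{V(K)}{R^{n-1}}.$$
   Context: A convex body is a compact convex set with non-empty interior; $V$ is volume; $B^n$ is the closed Euclidean unit ball centered at the origin. *)

theory Defs
  imports "HOL-Analysis.Analysis"
begin

definition convex_body :: "'a::euclidean_space set \<Rightarrow> bool" where
  "convex_body K \<longleftrightarrow> compact K \<and> convex K \<and> interior K \<noteq> {}"

definition centroid :: "'a::euclidean_space set \<Rightarrow> 'a" where
  "centroid K = (1 / measure lebesgue K) *\<^sub>R integral K (\<lambda>x. x)"

end

theory Submission
  imports Defs
begin


lemma slab_fubini:
  fixes W :: "'a::euclidean_space set" and u :: 'a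
  assumes W: "W \<in> sets borel" and u: "norm u = 1"
    and Wslab: "\<And>x. x \<in> W \<Longrightarrow> a \<le> u \<bullet> x \<and> u \<bullet> x \<le> a + s"
    and cd: "c \<le> d" and s: "0 \<le> s"
    and inC: "\<And>x t. x \<in> W \<Longrightarrow> t \<in> {c..d} \<Longrightarrow> x + t *\<^sub>R u \<in> cball 0 \<rho>"
  shows "ennreal (d - c) * emeasure lborel W \<le> ennreal s * emeasure lborel (cball (0::'a) \<rho>)"
proof -
  define E where "E = {p :: real \<times> 'a. fst p \<in> {c..d} \<and> snd p \<in> cball 0 \<rho> \<and> snd p - fst p *\<^sub>R u \<in> W}"
  have fm: "(\<lambda>p::real\<times>'a. snd p - fst p *\<^sub>R u) \<in> borel_measurable (lborel \<Otimes>\<^sub>M lborel)"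
    by measurable
  have E: "E \<in> sets (lborel \<Otimes>\<^sub>M (lborel::'a measure))"
  proof -
    have "E = {p \<in> space (lborel \<Otimes>\<^sub>M (lborel::'a measure)). fst p \<in> {c..d} \<and> snd p \<in> cball 0 \<rho> \<and> snd p - fst p *\<^sub>R u \<in> W}"
      by (auto simp: E_def space_pair_measure)
    also have "\<dots> \<in> sets (lborel \<Otimes>\<^sub>M (lborel::'a measure))"
    proof -
      have p1: "Measurable.pred (lborel \<Otimes>\<^sub>M (lborel::'a measure)) (\<lambda>x. snd x \<in> cball (0::'a) \<rho>)"
        by (rule pred_sets2[of _ lborel]) auto
      have p2: "Measurable.pred (lborel \<Otimes>\<^sub>M (lborel::'a measure)) (\<lambda>x. snd x - fst x *\<^sub>R u \<in> W)"
        by (rule pred_sets2[OF W fm])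
      show ?thesis using p1 p2 by measurable
    qed
    finally show ?thesis .
  qed
  have tr: "emeasure lborel ((\<lambda>x. x - t *\<^sub>R u) -` W) = emeasure lborel W" for t
  proof -
    have "emeasure lborel W = emeasure (distr lborel borel ((+) (- (t *\<^sub>R u)))) W"
      by (simp add: lborel_distr_plus)
    also have "\<dots> = emeasure lborel ((+) (- (t *\<^sub>R u)) -` W \<inter> space lborel)"
      using W by (subst emeasure_distr) auto
    also have "(+) (- (t *\<^sub>R u)) -` W = (\<lambda>x. x - t *\<^sub>R u) -` W"
      by (auto simp: algebra_simps)
    finally show ?thesis by simp
  qed
  have "emeasure (lborel \<Otimes>\<^sub>M lborel) E = (\<integral>\<^sup>+t. emeasure lborel (Pair t -` E) \<partial>lborel)"
    using E by (rule lborel.emeasure_pair_measure_alt)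
  also have "\<dots> = (\<integral>\<^sup>+t. indicator {c..d} t * emeasure lborel W \<partial>lborel)"
  proof (rule nn_integral_cong)
    fix t :: real
    show "emeasure lborel (Pair t -` E) = indicator {c..d} t * emeasure lborel W"
    proof (cases "t \<in> {c..d}")
      case True
      have "Pair t -` E = (\<lambda>x. x - t *\<^sub>R u) -` W"
        using True inC[of _ t] by (force simp: E_def)
      then show ?thesis using True tr by simp
    next
      case False
      then have "Pair t -` E = {}" by (auto simp: E_def)
      then show ?thesis using False by simp
    qed
  qed
  also have "\<dots> = ennreal (d - c) * emeasure lborel W"
    using cd by (subst mult.commute, subst nn_integral_cmult_indicator) (auto simp: mult.commute)
  finally have L: "emeasure (lborel \<Otimes>\<^sub>M lborel) E = ennreal (d - c) * emeasure lborel W" .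
  have "emeasure (lborel \<Otimes>\<^sub>M lborel) E = (\<integral>\<^sup>+x. emeasure lborel ((\<lambda>t. (t, x)) -` E) \<partial>lborel)"
    using E by (rule lborel_pair.emeasure_pair_measure_alt2)
  also have "\<dots> \<le> (\<integral>\<^sup>+x. indicator (cball (0::'a) \<rho>) x * ennreal s \<partial>lborel)"
  proof (rule nn_integral_mono)
    fix x :: 'a
    show "emeasure lborel ((\<lambda>t. (t, x)) -` E) \<le> indicator (cball 0 \<rho>) x * ennreal s"
    proof (cases "x \<in> cball 0 \<rho>")
      case True
      have "(\<lambda>t. (t, x)) -` E \<subseteq> {u \<bullet> x - a - s .. u \<bullet> x - a}"
      proof
        fix t assume "t \<in> (\<lambda>t. (t, x)) -` E"
        then have "x - t *\<^sub>R u \<in> W" by (auto simp: E_def)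
        from Wslab[OF this] u show "t \<in> {u \<bullet> x - a - s .. u \<bullet> x - a}"
          by (auto simp: inner_diff_right inner_commute[of u u] dot_square_norm)
      qed
      then have "emeasure lborel ((\<lambda>t. (t, x)) -` E) \<le> emeasure lborel {u \<bullet> x - a - s .. u \<bullet> x - a}"
        by (rule emeasure_mono) simp
      then show ?thesis using True s by simp
    next
      case False
      then have "(\<lambda>t. (t, x)) -` E = {}" by (auto simp: E_def)
      then show ?thesis using False by simp
    qed
  qed
  also have "\<dots> = ennreal s * emeasure lborel (cball (0::'a) \<rho>)"
    by (subst mult.commute, subst nn_integral_cmult_indicator) auto
  finally show ?thesis using L by simp
qed



lemma one_plus_pow_le_exp:
  fixes a :: real and n :: nat
  assumes "0 \<le> a" "n > 0"
  shows "(1 + a / n) ^ n \<le> exp a"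
proof -
  have "(1 + a / n) ^ n \<le> exp (a / n) ^ n"
    using assms by (intro power_mono) (auto simp: exp_ge_add_one_self add_nonneg_nonneg)
  also have "\<dots> = exp a" using assms by (simp add: exp_of_nat_mult[symmetric])
  finally show ?thesis .
qed

lemma gamma_ineq:
  fixes n :: nat
  assumes "n \<ge> 3"
  shows "10 * pi ^ n * real n ^ (n + 1) \<le> 25 ^ n * Gamma (real n / 2 + 1) ^ 2"
  using assms
proof (induction n rule: less_induct)
  case (less n)
  show ?case
  proof (cases "n = 3 \<or> n = 4")
    case True
    then show ?thesis
    proof
      assume n: "n = 3"
      have g: "Gamma (5 / 2 :: real) = 3 / 4 * sqrt pi"
      proof -
        have "Gamma (5 / 2 :: real) = Gamma ((1/2 + 1) + 1)" by simp
        also have "\<dots> = (1/2 + 1) * Gamma (1/2 + 1)" by (subst Gamma_plus1) auto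
        also have "Gamma (1/2 + 1 :: real) = 1/2 * Gamma (1/2)" by (subst Gamma_plus1) auto
        finally show ?thesis by (simp add: Gamma_one_half_real)
      qed
      have g2: "Gamma (5 / 2 :: real) * Gamma (5 / 2) = 9 / 16 * pi"
        by (simp add: g)
      have p315: "pi \<le> 3.15" using pi_approx by simp
      have "pi * pi \<le> 3.15 * 3.15" using p315 by (intro mult_mono) auto
      then have "pi * pi \<le> 10.85" by simp
      then have "810 * (pi * pi) * pi \<le> (810 * 10.85) * pi"
        by (intro mult_right_mono) auto
      then have "810 * pi ^ 3 \<le> 8789 * pi"
        by (simp add: power3_eq_cube mult.assoc)
      then show ?thesis using n by (simp add: g2 power2_eq_square) (insert pi_gt_zero, linarith)
    next
      assume n: "n = 4"
      have g: "Gamma (3::real) = 2"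
        by (simp add: Gamma_numeral)
      have p315: "pi \<le> 3.15" using pi_approx by simp
      have "pi ^ 4 \<le> (63/20) ^ 4" using p315 by (intro power_mono) auto
      moreover have "(63/20::real) ^ 4 \<le> 100" by (simp add: power_divide)
      ultimately have "pi ^ 4 \<le> 100" by linarith
      then show ?thesis using n by (simp add: g)
    qed
  next
    case False
    define m where "m = n - 2"
    have m3: "m \<ge> 3" and nm: "n = m + 2" using less.prems False by (auto simp: m_def)
    have IH: "10 * pi ^ m * real m ^ (m + 1) \<le> 25 ^ m * Gamma (real m / 2 + 1) ^ 2"
      using less.IH[of m] m3 nm by simp
    have gam: "Gamma (real n / 2 + 1) = (real m / 2 + 1) * Gamma (real m / 2 + 1)"
    proof -
      have eq: "real n / 2 + 1 = (real m / 2 + 1) + 1" using nm by simp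
      have ni: "real m / 2 + 1 \<notin> \<int>\<^sub>\<le>\<^sub>0"
        using nonpos_Ints_nonpos[of "real m / 2 + 1"] by (auto simp del: of_nat_add)
      show ?thesis unfolding eq by (rule Gamma_plus1[OF ni])
    qed
    have e2: "(1 + 2 / real m) ^ m \<le> 9"
    proof -
      have "(1 + 2 / real m) ^ m \<le> exp 2" using one_plus_pow_le_exp[of 2 m] m3 by simp
      also have "exp 2 = exp 1 * exp (1::real)" by (simp flip: exp_add)
      also have "\<dots> \<le> 3 * 3" using exp_le by (intro mult_mono) auto
      finally show ?thesis by simp
    qed
    have rat: "(1 + 2 / real m) \<le> 5 / 3" using m3 by (simp add: field_simps)
    have key: "4 * pi ^ 2 * real n ^ (m + 1) \<le> 625 * real m ^ (m + 1)"
    proof -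
      have rn: "real n = real m * (1 + 2 / real m)" using m3 nm by (simp add: field_simps)
      have "real n ^ (m+1) = real m ^ (m + 1) * (1 + 2 / real m) ^ (m+1)"
        by (subst rn, rule power_mult_distrib)
      also have "(1 + 2 / real m) ^ (m+1) \<le> 9 * (5/3)"
      proof -
        have "(1 + 2 / real m) ^ (m+1) = (1 + 2 / real m) ^ m * (1 + 2 / real m)" by simp
        also have "\<dots> \<le> 9 * (5/3)" using e2 rat m3 by (intro mult_mono) auto
        finally show ?thesis .
      qed
      finally have "real n ^ (m+1) \<le> real m ^ (m+1) * 15" by (simp add: mult_left_mono)
      moreover have "pi ^ 2 \<le> 10"
      proof -
        have p315: "pi \<le> 3.15" using pi_approx by simp
        have "pi ^ 2 \<le> (63/20) ^ 2" using p315 by (intro power_mono) auto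
        moreover have "(63/20::real) ^ 2 \<le> 10" by (simp add: power_divide)
        ultimately show ?thesis by linarith
      qed
      ultimately have "4 * pi ^ 2 * real n ^ (m + 1) \<le> 4 * 10 * (real m ^ (m+1) * 15)"
        by (intro mult_mono) auto
      moreover have "0 \<le> real m ^ (m+1)" by simp
      ultimately show ?thesis by linarith
    qed
    have "10 * pi ^ n * real n ^ (n + 1) = (10 * pi ^ m * real m ^ (m+1)) * (pi ^ 2 * real n ^ 2 * (real n ^ (m+1) / real m ^ (m+1)))"
    proof -
      have a1: "pi ^ n = pi ^ m * pi ^ 2" using nm by (simp add: power_add power2_eq_square)
      have a2: "real n ^ (n + 1) = real n ^ 2 * real n ^ (m + 1)" using nm
        by (simp add: power_add[symmetric])
      have a3: "real m ^ (m + 1) \<noteq> 0" using m3 by simp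
      show ?thesis using a3 unfolding a1 a2 by (simp add: field_simps)
    qed
    also have "\<dots> \<le> (25 ^ m * Gamma (real m / 2 + 1) ^ 2) * (625 / 4 * real n ^ 2)"
    proof (rule mult_mono[OF IH])
      show "pi ^ 2 * real n ^ 2 * (real n ^ (m + 1) / real m ^ (m + 1)) \<le> 625 / 4 * real n ^ 2"
      proof -
        have mp: "0 < real m ^ (m+1)" using m3 by simp
        have k2: "pi ^ 2 * (real n ^ (m + 1) / real m ^ (m + 1)) \<le> 625 / 4"
          using key mp by (simp add: divide_le_eq field_simps)
        then have "real n ^ 2 * (pi ^ 2 * (real n ^ (m + 1) / real m ^ (m + 1))) \<le> real n ^ 2 * (625 / 4)"
          by (rule mult_left_mono) simp
        then show ?thesis by (simp add: mult_ac)
      qed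
    qed auto
    also have "\<dots> = 25 ^ n * Gamma (real n / 2 + 1) ^ 2"
    proof -
      have a1: "(25::real) ^ n = 25 ^ m * 625" using nm by (simp add: power_add)
      have a2: "real m / 2 + 1 = real n / 2" using nm by simp
      show ?thesis unfolding a1 gam a2 by (simp add: power_mult_distrib power2_eq_square)
    qed
    finally show ?thesis .
  qed
qed

lemma powr_half_sq:
  fixes x :: real assumes "0 < x"
  shows "(x powr (real n / 2))\<^sup>2 = x ^ n"
proof -
  have "(x powr (real n / 2))\<^sup>2 = x powr (real n / 2 + real n / 2)"
    by (simp add: power2_eq_square powr_add[symmetric])
  also have "real n / 2 + real n / 2 = real n" by simp
  finally show ?thesis using assms by (simp add: powr_realpow)
qed

lemma numeric_big:
  fixes n :: nat
  assumes n3: "n \<ge> 3"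
  shows "unit_ball_vol (real n) * (3 * (1 + (1 / sqrt n)\<^sup>2) powr (real n / 2) + 1)
           \<le> 2 * (1 / sqrt n) * 5 ^ n / (real n powr (real n / 2))"
proof -
  define G where "G = Gamma (real n / 2 + 1)"
  have Gpos: "0 < G" unfolding G_def by (intro Gamma_real_pos) simp
  define X where "X = pi powr (real n / 2) * real n powr (real n / 2) * sqrt n"
  have X0: "0 \<le> X" unfolding X_def by simp
  have X2: "X\<^sup>2 = pi ^ n * real n ^ (n + 1)"
    using n3 by (simp add: X_def power_mult_distrib powr_half_sq)
  have "10 * X\<^sup>2 \<le> (5 ^ n * G)\<^sup>2"
  proof -
    have f: "((5::real) ^ n * G)\<^sup>2 = 25 ^ n * G\<^sup>2"
      by (simp add: power2_eq_square power_mult_distrib[symmetric] mult_ac)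
    have gi: "10 * pi ^ n * real n ^ (n + 1) \<le> 25 ^ n * G\<^sup>2"
      using gamma_ineq[OF n3] by (simp add: G_def)
    show ?thesis unfolding X2 f using gi by (simp add: mult.assoc)
  qed
  then have "sqrt (10 * X\<^sup>2) \<le> sqrt ((5 ^ n * G)\<^sup>2)" by (rule real_sqrt_le_mono)
  then have XG: "sqrt 10 * X \<le> 5 ^ n * G" using X0 Gpos by (simp add: real_sqrt_mult)
  define Q where "Q = (1 + (1 / sqrt n)\<^sup>2) powr (real n / 2)"
  have Q0: "0 \<le> Q" unfolding Q_def by simp
  have "Q\<^sup>2 = (1 + 1 / real n) ^ n"
    unfolding Q_def using n3 by (subst powr_half_sq) (auto simp: power_divide add_pos_nonneg)
  also have "\<dots> \<le> exp 1" using one_plus_pow_le_exp[of 1 n] n3 by simp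
  also have "\<dots> \<le> 3" by (rule exp_le)
  finally have "Q\<^sup>2 \<le> 3" .
  then have "Q \<le> sqrt 3" using Q0 real_le_rsqrt by blast
  moreover have "sqrt 3 \<le> (1733/1000::real)" by (rule real_le_lsqrt) (auto simp: power2_eq_square)
  moreover have "(31/10::real) \<le> sqrt 10" by (rule real_le_rsqrt) (simp add: power2_eq_square)
  ultimately have Qb: "3 * Q + 1 \<le> 2 * sqrt 10" by linarith
  have "X * (3 * Q + 1) \<le> X * (2 * sqrt 10)" using Qb X0 by (rule mult_left_mono)
  also have "\<dots> \<le> 2 * (5 ^ n * G)" using XG by (simp add: mult_ac)
  finally have main: "X * (3 * Q + 1) \<le> 2 * (5 ^ n * G)" .
  have np: "0 < real n powr (real n / 2)" "0 < sqrt (real n)" using n3 by auto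
  have "unit_ball_vol (real n) * (3 * Q + 1) = X * (3 * Q + 1) / (G * real n powr (real n / 2) * sqrt n)"
  proof -
    have uv: "unit_ball_vol (real n) = pi powr (real n / 2) / G" by (simp add: unit_ball_vol_def G_def)
    have aux: "\<And>a b c G q :: real. b \<noteq> 0 \<Longrightarrow> c \<noteq> 0 \<Longrightarrow> G \<noteq> 0 \<Longrightarrow> a / G * q = a * b * c * q / (G * b * c)"
      by (simp add: field_simps)
    show ?thesis unfolding uv X_def by (rule aux) (use np Gpos in auto)
  qed
  also have "\<dots> \<le> 2 * (5 ^ n * G) / (G * real n powr (real n / 2) * sqrt n)"
    using main np Gpos by (intro divide_right_mono) auto
  also have "\<dots> = 2 * (1 / sqrt n) * 5 ^ n / (real n powr (real n / 2))"
  proof -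
    have aux: "\<And>b c G f :: real. b \<noteq> 0 \<Longrightarrow> c \<noteq> 0 \<Longrightarrow> G \<noteq> 0 \<Longrightarrow> 2 * (f * G) / (G * b * c) = 2 * (1 / c) * f / b"
      by (simp add: field_simps)
    show ?thesis by (rule aux) (use np Gpos in auto)
  qed
  finally show ?thesis unfolding Q_def .
qed

lemma numeric:
  fixes n :: nat
  assumes "n \<ge> 1"
  shows "\<exists>y>0. unit_ball_vol (real n) * (3 * (1 + y\<^sup>2) powr (real n / 2) + 1)
           \<le> 2 * y * 5 ^ n / (real n powr (real n / 2))"
proof -
  consider "n = 1" | "n = 2" | "n \<ge> 3" using assms by linarith
  then show ?thesis
  proof cases
    case 1
    have s5: "sqrt 5 \<le> (3::real)" by (rule real_le_lsqrt) auto
    have "(1 + 2\<^sup>2 :: real) powr (1 / 2) = sqrt 5" by (simp add: powr_half_sqrt)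
    then have "unit_ball_vol (real n) * (3 * (1 + 2\<^sup>2) powr (real n / 2) + 1)
           \<le> 2 * 2 * 5 ^ n / (real n powr (real n / 2))"
      using 1 s5 by simp
    then show ?thesis by (intro exI[of _ 2]) auto
  next
    case 2
    have uv: "unit_ball_vol 2 = pi" by (simp add: unit_ball_vol_def Gamma_numeral)
    have "pi \<le> 3.15" using pi_approx by simp
    then have "unit_ball_vol (real n) * (3 * (1 + 1\<^sup>2) powr (real n / 2) + 1)
           \<le> 2 * 1 * 5 ^ n / (real n powr (real n / 2))"
      using 2 uv by simp
    then show ?thesis by (intro exI[of _ 1]) auto
  next
    case 3
    then show ?thesis using numeric_big[OF 3] by (intro exI[of _ "1 / sqrt n"]) auto
  qed
qed



lemma slab_real:
  fixes W :: "'a::euclidean_space set" and u :: 'a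
  assumes W: "compact W" and u: "norm u = 1"
    and Wslab: "\<And>x. x \<in> W \<Longrightarrow> a \<le> u \<bullet> x \<and> u \<bullet> x \<le> a + s"
    and cd: "c \<le> d" and s: "0 \<le> s"
    and inC: "\<And>x t. x \<in> W \<Longrightarrow> t \<in> {c..d} \<Longrightarrow> x + t *\<^sub>R u \<in> cball 0 \<rho>"
  shows "(d - c) * measure lebesgue W \<le> s * measure lebesgue (cball (0::'a) \<rho>)"
proof -
  have Wb: "W \<in> sets borel" using W by (simp add: borel_compact)
  have e: "ennreal (d - c) * emeasure lborel W \<le> ennreal s * emeasure lborel (cball (0::'a) \<rho>)"
    by (rule slab_fubini[OF Wb u Wslab cd s inC])
  have bW: "emeasure lborel W < \<infinity>" using emeasure_bounded_finite compact_imp_bounded[OF W] by blast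
  have fW: "emeasure lborel W = ennreal (measure lborel W)"
    using bW by (intro emeasure_eq_ennreal_measure) (auto simp: less_top)
  have fC: "emeasure lborel (cball (0::'a) \<rho>) = ennreal (measure lborel (cball (0::'a) \<rho>))"
    using emeasure_bounded_finite[of "cball (0::'a) \<rho>"]
    by (intro emeasure_eq_ennreal_measure) auto
  have "ennreal ((d - c) * measure lborel W) \<le> ennreal (s * measure lborel (cball (0::'a) \<rho>))"
    using e cd s unfolding fW fC by (simp add: ennreal_mult)
  then have "(d - c) * measure lborel W \<le> s * measure lborel (cball (0::'a) \<rho>)"
    using s by (subst (asm) ennreal_le_iff) auto
  moreover have "measure lebesgue W = measure lborel W" using Wb by simp
  moreover have "measure lebesgue (cball (0::'a) \<rho>) = measure lborel (cball (0::'a) \<rho>)" by simp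
  ultimately show ?thesis by simp
qed

lemma key:
  fixes K :: "'a::euclidean_space set"
  assumes cb: "convex_body K" and c0: "centroid K = 0" and KR: "K \<subseteq> cball 0 R"
    and s: "0 < s" and p: "p \<notin> K" "norm p \<le> s" and L: "s \<le> 2 * L"
  shows "measure lebesgue K * (2 * L - s) \<le> 3 * s * measure lebesgue (cball (0::'a) (sqrt (R\<^sup>2 + L\<^sup>2)))"
proof -
  have Kc: "compact K" and Kv: "convex K" using cb by (auto simp: convex_body_def)
  have Kl: "K \<in> lmeasurable" using Kc by (rule lmeasurable_compact)
  define V where "V = measure lebesgue K"
  define C where "C = measure lebesgue (cball (0::'a) (sqrt (R\<^sup>2 + L\<^sup>2)))"
  have C0: "0 \<le> C" unfolding C_def by simp
  show ?thesis
  proof (cases "V = 0")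
    case True
    then show ?thesis using C0 s unfolding V_def[symmetric] C_def[symmetric] by simp
  next
    case Vne: False
    obtain a b where ab: "inner a p < b" "\<And>x. x \<in> K \<Longrightarrow> inner a x > b"
      using separating_hyperplane_closed_point[OF Kv compact_imp_closed[OF Kc] p(1)] by blast
    have Kne: "K \<noteq> {}" using Vne unfolding V_def by auto
    have a0: "a \<noteq> 0"
    proof
      assume "a = 0"
      with Kne ab show False by auto
    qed
    define u where "u = - (1 / norm a) *\<^sub>R a"
    have un: "norm u = 1" using a0 by (simp add: u_def)
    have uK: "u \<bullet> x < s" if "x \<in> K" for x
    proof -
      have "u \<bullet> x = - (a \<bullet> x) / norm a" by (simp add: u_def)
      also have "\<dots> < - (a \<bullet> p) / norm a"
        using ab(1) ab(2)[OF that] a0 by (simp add: divide_strict_right_mono)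
      also have "\<dots> = u \<bullet> p" by (simp add: u_def)
      also have "\<dots> \<le> norm u * norm p" by (rule norm_cauchy_schwarz)
      also have "\<dots> \<le> s" using un p(2) by simp
      finally show ?thesis .
    qed
    have Kle: "K \<in> sets lebesgue" using Kl by auto
    have idint: "(\<lambda>x. x) integrable_on K"
    proof -
      have "(\<lambda>x. x) absolutely_integrable_on K"
      proof (rule measurable_bounded_by_integrable_imp_absolutely_integrable[where g="\<lambda>x. R"])
        show "(\<lambda>x. x) \<in> borel_measurable (lebesgue_on K)"
          by (rule continuous_imp_measurable_on_sets_lebesgue) (auto intro: continuous_intros Kle)
        show "K \<in> sets lebesgue" by (rule Kle)
        show "(\<lambda>x. R) integrable_on K" using Kl by (rule integrable_on_const)
        show "norm x \<le> R" if "x \<in> K" for x using KR that by auto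
      qed
      then show ?thesis using set_lebesgue_integral_eq_integral(1) by blast
    qed
    have I0: "integral K (\<lambda>x. x) = 0"
      using c0 Vne unfolding centroid_def V_def[symmetric] by simp
    have hg: "((\<lambda>x. u \<bullet> x) has_integral 0) K"
    proof -
      have "((\<lambda>x. x) has_integral 0) K" using idint I0 by (metis has_integral_integral)
      from has_integral_linear[OF this bounded_linear_inner_right[of u]]
      show ?thesis by (simp add: o_def)
    qed
    have hs_open: "{x::'a. u \<bullet> x < c} \<in> sets lebesgue" for c
      by (intro sets_completionI_sets) (simp add: open_halfspace_lt)
    have hs_closed: "{x::'a. u \<bullet> x \<ge> c} \<in> sets lebesgue" for c
      by (intro sets_completionI_sets) (simp add: closed_halfspace_ge)
    define A where "A = K \<inter> {x. u \<bullet> x < - s}"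
    define M where "M = K \<inter> ({x. u \<bullet> x \<ge> - s} \<inter> {x. u \<bullet> x < 0})"
    define P where "P = K \<inter> {x. u \<bullet> x \<ge> 0}"
    have Al: "A \<in> lmeasurable" unfolding A_def by (rule fmeasurable_Int_fmeasurable[OF Kl hs_open])
    have Ml: "M \<in> lmeasurable" unfolding M_def
      by (rule fmeasurable_Int_fmeasurable[OF Kl]) (intro sets.Int hs_open hs_closed)
    have Pl: "P \<in> lmeasurable" unfolding P_def by (rule fmeasurable_Int_fmeasurable[OF Kl hs_closed])
    have ind: "(indicator S has_integral measure lebesgue S) K" if "S \<in> lmeasurable" "S \<subseteq> K" for S
    proof -
      have "(indicat_real S has_integral measure lebesgue S) UNIV"
        using that lmeasurable_iff_indicator_has_integral by blast
      moreover have e: "(\<lambda>x. if x \<in> K then indicat_real S x else 0) = indicat_real S"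
        using that by (auto simp: indicator_def fun_eq_iff)
      ultimately show ?thesis
        using has_integral_restrict[of K UNIV "indicat_real S" "measure lebesgue S"] by (simp only: e) simp
    qed
    have hA: "(indicat_real A has_integral measure lebesgue A) K" by (rule ind[OF Al]) (auto simp: A_def)
    have hP: "(indicat_real P has_integral measure lebesgue P) K" by (rule ind[OF Pl]) (auto simp: P_def)
    have hr: "((\<lambda>x. s * indicator P x - s * indicator A x) has_integral
               (s * measure lebesgue P - s * measure lebesgue A)) K"
      by (intro has_integral_diff has_integral_mult_right hA hP)
    have "0 \<le> s * measure lebesgue P - s * measure lebesgue A"
    proof (rule has_integral_le[OF hg hr])
      fix x assume x: "x \<in> K"
      show "u \<bullet> x \<le> s * indicator P x - s * indicator A x"
        using uK[OF x] x s by (auto simp: indicator_def A_def P_def)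
    qed
    then have AP: "measure lebesgue A \<le> measure lebesgue P" using s by simp
    have "K = A \<union> M \<union> P" by (auto simp: A_def M_def P_def)
    then have "V \<le> measure lebesgue (A \<union> M) + measure lebesgue P"
      unfolding V_def using Al Ml Pl by (metis fmeasurableD measure_Un_le sets.Un)
    also have "measure lebesgue (A \<union> M) \<le> measure lebesgue A + measure lebesgue M"
      using Al Ml by (intro measure_Un_le) auto
    finally have Vb: "V \<le> 2 * measure lebesgue P + measure lebesgue M" using AP by simp
    define \<rho> where "\<rho> = sqrt (R\<^sup>2 + L\<^sup>2)"
    define Wp where "Wp = cball (0::'a) R \<inter> {x. u \<bullet> x \<ge> 0} \<inter> {x. u \<bullet> x \<le> s}"
    define Wm where "Wm = cball (0::'a) R \<inter> {x. u \<bullet> x \<ge> - s} \<inter> {x. u \<bullet> x \<le> 0}"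
    have Wpc: "compact Wp" unfolding Wp_def
      by (intro compact_Int_closed closed_halfspace_ge closed_halfspace_le compact_cball)
    have Wmc: "compact Wm" unfolding Wm_def
      by (intro compact_Int_closed closed_halfspace_ge closed_halfspace_le compact_cball)
    have nsq: "norm (x + t *\<^sub>R u) ^ 2 = norm x ^ 2 + 2 * t * (u \<bullet> x) + t ^ 2" for x t
    proof -
      have uu: "u \<bullet> u = 1" using un by (simp add: power2_norm_eq_inner[symmetric])
      have "norm (x + t *\<^sub>R u) ^ 2 = (x + t *\<^sub>R u) \<bullet> (x + t *\<^sub>R u)" by (rule power2_norm_eq_inner)
      also have "\<dots> = x \<bullet> x + 2 * t * (u \<bullet> x) + t ^ 2 * (u \<bullet> u)"
        by (simp add: inner_add_left inner_add_right inner_commute algebra_simps power2_eq_square)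
      finally show ?thesis by (simp add: uu power2_norm_eq_inner)
    qed
    have inball: "x + t *\<^sub>R u \<in> cball 0 \<rho>" if "norm x \<le> R" "norm x ^ 2 + 2 * t * (u \<bullet> x) + t ^ 2 \<le> R\<^sup>2 + L\<^sup>2" for x t
    proof -
      have "norm (x + t *\<^sub>R u) \<le> \<rho>" unfolding \<rho>_def
        by (rule real_le_rsqrt) (use that nsq in simp)
      then show ?thesis by simp
    qed
    have slp: "(2 * L - s) * measure lebesgue Wp \<le> s * C"
    proof -
      have "((L - s) - (- L)) * measure lebesgue Wp \<le> s * measure lebesgue (cball (0::'a) \<rho>)"
      proof (rule slab_real[OF Wpc un, of 0])
        show "0 \<le> u \<bullet> x \<and> u \<bullet> x \<le> 0 + s" if "x \<in> Wp" for x using that by (auto simp: Wp_def)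
        show "- L \<le> L - s" using L by simp
        show "0 \<le> s" using s by simp
        show "x + t *\<^sub>R u \<in> cball 0 \<rho>" if "x \<in> Wp" "t \<in> {- L..L - s}" for x t
        proof (rule inball)
          have x: "norm x \<le> R" "0 \<le> u \<bullet> x" "u \<bullet> x \<le> s" using that by (auto simp: Wp_def)
          then show "norm x \<le> R" by simp
          have t: "- L \<le> t" "t \<le> L - s" using that by auto
          have "norm x ^ 2 \<le> R ^ 2" using x(1) norm_ge_zero power_mono by blast
          moreover have "2 * t * (u \<bullet> x) + t ^ 2 \<le> L ^ 2"
          proof (cases "t \<le> 0")
            case True
            have "2 * t * (u \<bullet> x) \<le> 0" using True x(2) by (simp add: mult_nonpos_nonneg)
            moreover have "t ^ 2 \<le> L ^ 2" using True t L s by (intro power2_le_iff_abs_le[THEN iffD2]) auto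
            ultimately show ?thesis by simp
          next
            case False
            have "2 * t * (u \<bullet> x) \<le> 2 * t * s" using False x(3) by (intro mult_left_mono) auto
            moreover have "(t + s) ^ 2 \<le> L ^ 2" using False t s by (intro power_mono) auto
            moreover have "0 \<le> s * s" by simp
            moreover have "(t + s) ^ 2 = t ^ 2 + 2 * t * s + s * s" "(- t + s) ^ 2 = t ^ 2 - 2 * t * s + s * s"
              by (simp_all add: power2_eq_square algebra_simps)
            ultimately show ?thesis by linarith
          qed
          ultimately show "norm x ^ 2 + 2 * t * (u \<bullet> x) + t ^ 2 \<le> R\<^sup>2 + L\<^sup>2" by simp
        qed
      qed
      then show ?thesis unfolding C_def \<rho>_def by simp
    qed
    have slm: "(2 * L - s) * measure lebesgue Wm \<le> s * C"
    proof -
      have "(L - (s - L)) * measure lebesgue Wm \<le> s * measure lebesgue (cball (0::'a) \<rho>)"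
      proof (rule slab_real[OF Wmc un, of "- s"])
        show "- s \<le> u \<bullet> x \<and> u \<bullet> x \<le> - s + s" if "x \<in> Wm" for x using that by (auto simp: Wm_def)
        show "s - L \<le> L" using L by simp
        show "0 \<le> s" using s by simp
        show "x + t *\<^sub>R u \<in> cball 0 \<rho>" if "x \<in> Wm" "t \<in> {s - L..L}" for x t
        proof (rule inball)
          have x: "norm x \<le> R" "- s \<le> u \<bullet> x" "u \<bullet> x \<le> 0" using that by (auto simp: Wm_def)
          then show "norm x \<le> R" by simp
          have t: "s - L \<le> t" "t \<le> L" using that by auto
          have "norm x ^ 2 \<le> R ^ 2" using x(1) norm_ge_zero power_mono by blast
          moreover have "2 * t * (u \<bullet> x) + t ^ 2 \<le> L ^ 2"
          proof (cases "t \<ge> 0")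
            case True
            have "2 * t * (u \<bullet> x) \<le> 0" using True x(3) by (simp add: mult_nonneg_nonpos)
            moreover have "t ^ 2 \<le> L ^ 2" using True t L s by (intro power2_le_iff_abs_le[THEN iffD2]) auto
            ultimately show ?thesis by simp
          next
            case False
            have "t * (u \<bullet> x) \<le> t * (- s)" using False x(2)
              by (intro mult_left_mono_neg) auto
            then have "2 * t * (u \<bullet> x) \<le> 2 * (- t) * s" by (simp add: mult.commute)
            moreover have "(- t + s) ^ 2 \<le> L ^ 2" using False t s by (intro power_mono) auto
            moreover have "0 \<le> s * s" by simp
            moreover have "(t + s) ^ 2 = t ^ 2 + 2 * t * s + s * s" "(- t + s) ^ 2 = t ^ 2 - 2 * t * s + s * s"
              by (simp_all add: power2_eq_square algebra_simps)
            ultimately show ?thesis by linarith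
          qed
          ultimately show "norm x ^ 2 + 2 * t * (u \<bullet> x) + t ^ 2 \<le> R\<^sup>2 + L\<^sup>2" by simp
        qed
      qed
      then show ?thesis unfolding C_def \<rho>_def by simp
    qed
    have PW: "measure lebesgue P \<le> measure lebesgue Wp"
      using Pl lmeasurable_compact[OF Wpc] KR
      by (intro measure_mono_fmeasurable) (auto simp: P_def Wp_def uK less_imp_le)
    have MW: "measure lebesgue M \<le> measure lebesgue Wm"
      using Ml lmeasurable_compact[OF Wmc] KR
      by (intro measure_mono_fmeasurable) (auto simp: M_def Wm_def)
    have L0: "0 \<le> 2 * L - s" using L by simp
    have "V * (2 * L - s) \<le> (2 * measure lebesgue P + measure lebesgue M) * (2 * L - s)"
      using Vb L0 by (rule mult_right_mono)
    also have "\<dots> \<le> (2 * measure lebesgue Wp + measure lebesgue Wm) * (2 * L - s)"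
      using PW MW L0 by (intro mult_right_mono) auto
    also have "\<dots> \<le> 3 * s * C" using slp slm by (simp add: algebra_simps)
    finally show ?thesis unfolding V_def C_def .
  qed
qed



lemma final_arith:
  fixes V R s y w Q np F P :: real
  assumes pos: "V > 0" "R > 0" "s > 0" "y > 0" "w > 0" "Q \<ge> 0" "np > 0" "F > 0" "P > 0"
    and keyb: "V * (2 * (y * R) - s) \<le> 3 * s * (w * (R * P) * Q)"
    and Vb: "V \<le> w * (R * P)"
    and num: "w * (3 * Q + 1) \<le> 2 * y * F / np"
    and sB: "s < (np / F) * (V / P)"
  shows False
proof -
  have sFP: "s * F * P < np * V" using sB pos by (simp add: field_simps)
  have "2 * y * R * V \<le> 3 * s * (w * (R * P) * Q) + V * s" using keyb by (simp add: algebra_simps)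
  also have "V * s \<le> w * (R * P) * s" using Vb pos by (intro mult_right_mono) auto
  finally have a: "2 * y * R * V \<le> s * R * P * (w * (3 * Q + 1))" by (simp add: algebra_simps)
  have num': "w * (3 * Q + 1) * np \<le> 2 * y * F" using num pos by (simp add: field_simps)
  have "2 * y * R * V * np \<le> s * R * P * (w * (3 * Q + 1)) * np"
    using a pos by (intro mult_right_mono) auto
  also have "\<dots> = (s * R * P) * (w * (3 * Q + 1) * np)" by (simp add: algebra_simps)
  also have "\<dots> \<le> (s * R * P) * (2 * y * F)" using num' pos by (intro mult_left_mono) auto
  finally have "(2 * y * R) * (V * np) \<le> (2 * y * R) * (s * F * P)" by (simp add: algebra_simps)
  then have "V * np \<le> s * F * P" using pos by simp
  with sFP show False by (simp add: mult.commute)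
qed

theorem lemma2p1:
  fixes K :: "'a::euclidean_space set" and R :: real
  assumes "convex_body K"
    and "centroid K = 0"
    and "R > 0"
    and "K \<subseteq> cball 0 R"
  shows "\<exists>r. r \<ge> (real DIM('a) powr (real DIM('a) / 2) / 5 ^ DIM('a))
                   * (measure lebesgue K / R ^ (DIM('a) - 1))
            \<and> cball 0 r \<subseteq> K"
proof -
  note cb = assms(1) and c0 = assms(2) and R = assms(3) and KR = assms(4)
  define n where "n = DIM('a)"
  have n1: "n \<ge> 1" unfolding n_def by (simp add: DIM_positive Suc_leI)
  define V where "V = measure lebesgue K"
  define w where "w = unit_ball_vol (real n)"
  define np where "np = real n powr (real n / 2)"
  define F where "F = (5::real) ^ n"
  define P where "P = R ^ (n - 1)"
  define B where "B = (np / F) * (V / P)"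
  have Kc: "compact K" and Kint: "interior K \<noteq> {}" using cb by (auto simp: convex_body_def)
  have Kl: "K \<in> lmeasurable" using Kc by (rule lmeasurable_compact)
  have w0: "w > 0" unfolding w_def by simp
  have np0: "np > 0" unfolding np_def using n1 by simp
  have F0: "F > 0" unfolding F_def by simp
  have P0: "P > 0" unfolding P_def using R by simp
  have RP: "R ^ n = R * P" unfolding P_def using n1 by (metis Suc_diff_le diff_Suc_1 power_Suc)
  have mcb: "measure lebesgue (cball (0::'a) r) = w * r ^ n" if "r \<ge> 0" for r
    using content_cball[OF that, of 0] unfolding w_def n_def by simp
  have V0: "V > 0"
  proof -
    obtain x where x: "x \<in> interior K" using Kint by blast
    then obtain e where e: "e > 0" "ball x e \<subseteq> K" using mem_interior by blast
    have "0 < measure lebesgue (ball x e)" using e(1) by simp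
    also have "\<dots> \<le> V" unfolding V_def using e(2) Kl by (intro measure_mono_fmeasurable) auto
    finally show ?thesis .
  qed
  have VR: "V \<le> w * (R * P)"
  proof -
    have Ks: "K \<in> sets lebesgue" using Kl by auto
    have "V \<le> measure lebesgue (cball (0::'a) R)" unfolding V_def using KR Ks
      by (intro measure_mono_fmeasurable) (auto intro: lmeasurable_cball)
    also have "\<dots> = w * (R * P)" using mcb[of R] R RP by simp
    finally show ?thesis .
  qed
  obtain y where y: "y > 0" and num: "w * (3 * (1 + y\<^sup>2) powr (real n / 2) + 1) \<le> 2 * y * F / np"
    using numeric[OF n1] unfolding w_def F_def np_def by blast
  define Q where "Q = (1 + y\<^sup>2) powr (real n / 2)"
  have Q0: "Q \<ge> 0" unfolding Q_def by simp
  define L where "L = y * R"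
  have C: "measure lebesgue (cball (0::'a) (sqrt (R\<^sup>2 + L\<^sup>2))) = w * (R * P) * Q"
  proof -
    have "sqrt (R\<^sup>2 + L\<^sup>2) = R * sqrt (1 + y\<^sup>2)"
    proof -
      have "R\<^sup>2 + L\<^sup>2 = R\<^sup>2 * (1 + y\<^sup>2)" by (simp add: L_def power_mult_distrib algebra_simps)
      then have "sqrt (R\<^sup>2 + L\<^sup>2) = sqrt (R\<^sup>2) * sqrt (1 + y\<^sup>2)" by (simp add: real_sqrt_mult)
      then show ?thesis using R by simp
    qed
    then have "sqrt (R\<^sup>2 + L\<^sup>2) ^ n = R ^ n * sqrt (1 + y\<^sup>2) ^ n" by (simp add: power_mult_distrib)
    also have "sqrt (1 + y\<^sup>2) ^ n = Q"
    proof -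
      have "sqrt (1 + y\<^sup>2) ^ n = ((1 + y\<^sup>2) powr (1/2)) powr real n"
        by (simp add: powr_half_sqrt add_pos_nonneg powr_realpow)
      also have "\<dots> = Q" unfolding Q_def by (simp add: powr_powr)
      finally show ?thesis .
    qed
    finally show ?thesis using mcb[of "sqrt (R\<^sup>2 + L\<^sup>2)"] RP by simp
  qed
  have B0: "B > 0" unfolding B_def using np0 F0 V0 P0 by simp
  have B2L: "B \<le> 2 * L"
  proof -
    have "w * np \<le> w * (3 * Q + 1) * np" using w0 np0 Q0 by (intro mult_right_mono) auto
    also have "\<dots> \<le> 2 * y * F" using num np0 unfolding Q_def by (simp add: field_simps)
    finally have wn: "w * np \<le> 2 * y * F" .
    have "B \<le> (np / F) * (w * (R * P) / P)" unfolding B_def using VR np0 F0 P0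
      by (intro mult_left_mono divide_right_mono) auto
    also have "\<dots> = (w * np) * R / F" using P0 by (simp add: field_simps)
    also have "\<dots> \<le> (2 * y * F) * R / F" using wn R F0 by (intro divide_right_mono mult_right_mono) auto
    also have "\<dots> = 2 * L" using F0 by (simp add: L_def)
    finally show ?thesis .
  qed
  have ballK: "ball 0 B \<subseteq> K"
  proof
    fix x :: 'a assume x: "x \<in> ball 0 B"
    show "x \<in> K"
    proof (rule ccontr)
      assume xK: "x \<notin> K"
      define s where "s = max (norm x) (B / 2)"
      have s0: "s > 0" and sB: "s < B" and xs: "norm x \<le> s" using x B0 by (auto simp: s_def)
      have "V * (2 * L - s) \<le> 3 * s * measure lebesgue (cball (0::'a) (sqrt (R\<^sup>2 + L\<^sup>2)))"
        unfolding V_def by (rule key[OF cb c0 KR s0 xK xs]) (use sB B2L in linarith)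
      then have "V * (2 * L - s) \<le> 3 * s * (w * (R * P) * Q)" unfolding C .
      then have kb: "V * (2 * (y * R) - s) \<le> 3 * s * (w * (R * P) * Q)" unfolding L_def .
      show False
        by (rule final_arith[OF V0 R s0 y w0 Q0 np0 F0 P0 kb VR num[folded Q_def]]) (use sB in \<open>simp add: B_def\<close>)
    qed
  qed
  have "cball 0 B \<subseteq> K"
  proof -
    have "closure (ball (0::'a) B) \<subseteq> K"
      using ballK Kc by (intro closure_minimal) (auto intro: compact_imp_closed)
    then show ?thesis using B0 by simp
  qed
  moreover have "B = (real DIM('a) powr (real DIM('a) / 2) / 5 ^ DIM('a)) * (measure lebesgue K / R ^ (DIM('a) - 1))"
    unfolding B_def np_def F_def V_def P_def n_def by simp
  ultimately show ?thesis by (intro exI[of _ B]) auto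
qed


end
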